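(* Let $I$ be the set of all $231$-avoiding permutations (of all sizes $n\ge0$, including the empty permutation) all of whose cycles have length $1$ or $2$. Then \[ i(t,x)=\sum_{\pi\in I}t^{c_1(\pi)}x^{c_2(\pi)}=\dfrac{1-x}{1-t-2x}. \]
   Context: A permutation avoids $231$ if there are no indices $i<j<k$ with $\pi_k<\pi_i<\pi_j$. $c_k(\pi)$ denotes the number of $k$-cycles of $\pi$. *)

theory Defs
  imports "HOL-Combinatorics.Combinatorics" "HOL-Computational_Algebra.Formal_Power_Series"
begin

text \<open>A permutation of size n is a function p with p permutes {1..n}
  (identity outside {1..n}); the empty permutation is the case n = 0.\<close>

definition avoids231 :: "nat \<Rightarrow> (nat \<Rightarrow> nat) \<Rightarrow> bool" where
  "avoids231 n p \<longleftrightarrow>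
     \<not> (\<exists>i j k. 1 \<le> i \<and> i < j \<and> j < k \<and> k \<le> n \<and> p k < p i \<and> p i < p j)"

definition cycles_of :: "nat \<Rightarrow> (nat \<Rightarrow> nat) \<Rightarrow> nat set set" where
  "cycles_of n p = (\<lambda>x. orbit p x) ` {1..n}"

definition ncyc :: "nat \<Rightarrow> (nat \<Rightarrow> nat) \<Rightarrow> nat \<Rightarrow> nat" where
  "ncyc k p n = card {C \<in> cycles_of n p. card C = k}"

definition I_set :: "(nat \<times> (nat \<Rightarrow> nat)) set" where
  "I_set = {(n, p). p permutes {1..n} \<and> avoids231 n p \<and>
                    (\<forall>C \<in> cycles_of n p. card C = 1 \<or> card C = 2)}"

text \<open>Bivariate generating function sum over I of t^c1 x^c2, as a formal power series
  in x whose coefficients are formal power series in t.\<close>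

definition i_gf :: "real fps fps" where
  "i_gf = Abs_fps (\<lambda>b. Abs_fps (\<lambda>a.
      of_nat (card {(n, p) \<in> I_set. ncyc 1 p n = a \<and> ncyc 2 p n = b})))"

definition t_var :: "real fps fps" where
  "t_var = fps_const fps_X"

end

theory Submission
  imports Defs
begin

unbundle fps_syntax


definition Sn :: "nat \<Rightarrow> (nat \<Rightarrow> nat) set" where
  "Sn n = {p. p permutes {1..n} \<and> avoids231 n p \<and> (\<forall>x. p (p x) = x)}"

definition glue :: "nat \<Rightarrow> nat \<Rightarrow> (nat \<Rightarrow> nat) \<Rightarrow> nat \<Rightarrow> nat" where
  "glue k n r = (\<lambda>x. if x < k then r x else if x \<le> n then k + n - x else x)"

definition restr :: "nat \<Rightarrow> (nat \<Rightarrow> nat) \<Rightarrow> nat \<Rightarrow> nat" where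
  "restr k p = (\<lambda>x. if x < k then p x else x)"

lemma invol_permutes:
  assumes "\<forall>x. p (p x) = x" "\<forall>x. x \<notin> S \<longrightarrow> p x = x"
  shows "p permutes S"
  unfolding permutes_def
proof (intro conjI allI impI)
  fix x assume "x \<notin> S" then show "p x = x" using assms by blast
next
  fix y show "\<exists>!x. p x = y"
  proof
    show "p (p y) = y" using assms by blast
  next
    fix x assume h: "p x = y"
    have "p (p x) = x" using assms(1) by blast
    then show "x = p y" using h by simp
  qed
qed

lemma Sn_out: "r \<in> Sn m \<Longrightarrow> x \<notin> {1..m} \<Longrightarrow> r x = x"
  unfolding Sn_def by (auto intro: permutes_not_in)

lemma Sn_in: assumes "r \<in> Sn m" "x \<in> {1..m}" shows "r x \<in> {1..m}"
proof -
  have "r permutes {1..m}" using assms(1) by (simp add: Sn_def)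
  then have "r x \<in> {1..m} \<longleftrightarrow> x \<in> {1..m}" by (rule permutes_in_image)
  then show ?thesis using assms(2) by blast
qed

lemma Sn_lt:
  assumes "r \<in> Sn m" "x \<le> m" shows "r x \<le> m"
proof (cases "x = 0")
  case True
  then have "r x = x" using Sn_out[OF assms(1)] by auto
  then show ?thesis using assms by simp
next
  case False
  then have "x \<in> {1..m}" using assms by auto
  then have "r x \<in> {1..m}" using Sn_in[OF assms(1)] by blast
  then show ?thesis by simp
qed

lemma glue_in:
  assumes k: "1 \<le> k" "k \<le> n" and r: "r \<in> Sn (k - 1)"
  shows "glue k n r \<in> Sn n"
proof -
  let ?p = "glue k n r"
  have rlt: "r x < k" if "x < k" for x
  proof -
    have "x \<le> k - 1" using that by simp
    then have "r x \<le> k - 1" using Sn_lt[OF r] by blast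
    then show ?thesis using k by simp
  qed
  have inv: "\<forall>x. ?p (?p x) = x"
  proof
    fix x show "?p (?p x) = x"
    proof (cases "x < k")
      case True then show ?thesis using rlt[OF True] r unfolding glue_def Sn_def by auto
    next
      case False then show ?thesis unfolding glue_def by auto
    qed
  qed
  have out: "\<forall>x. x \<notin> {1..n} \<longrightarrow> ?p x = x"
  proof (intro allI impI)
    fix x assume x: "x \<notin> {1..n}"
    show "?p x = x"
    proof (cases "x = 0")
      case True then show ?thesis using Sn_out[OF r, of 0] k unfolding glue_def by auto
    next
      case False then show ?thesis using x k unfolding glue_def by auto
    qed
  qed
  have av: "avoids231 n ?p"
    unfolding avoids231_def
  proof
    assume "\<exists>i j l. 1 \<le> i \<and> i < j \<and> j < l \<and> l \<le> n \<and> ?p l < ?p i \<and> ?p i < ?p j"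
    then obtain i j l where h: "1 \<le> i" "i < j" "j < l" "l \<le> n" "?p l < ?p i" "?p i < ?p j" by blast
    show False
    proof (cases "l < k")
      case True
      then have "r l < r i" "r i < r j" using h unfolding glue_def by auto
      moreover have "l \<le> k - 1" using True by simp
      moreover have "avoids231 (k - 1) r" using r unfolding Sn_def by blast
      ultimately show False using h unfolding avoids231_def by blast
    next
      case l: False
      show False
      proof (cases "i < k")
        case True
        then have "?p i < k" using rlt unfolding glue_def by auto
        moreover have "?p l \<ge> k" using l h unfolding glue_def by auto
        ultimately show False using h by simp
      next
        case False
        then show False using h unfolding glue_def by auto
      qed
    qed
  qed
  show ?thesis unfolding Sn_def using inv out av invol_permutes[OF inv out] by blast
qed


lemma dec_bound1:
  fixes f :: "nat \<Rightarrow> nat"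
  assumes d: "\<forall>i j. k \<le> i \<longrightarrow> i < j \<longrightarrow> j \<le> n \<longrightarrow> f j < f i"
  shows "k \<le> x \<Longrightarrow> x \<le> n \<Longrightarrow> f n + (n - x) \<le> f x"
proof (induction "n - x" arbitrary: x)
  case 0 then show ?case by simp
next
  case (Suc d)
  then have "f n + (n - Suc x) \<le> f (Suc x)" by simp
  moreover have "f (Suc x) < f x" using d Suc by auto
  ultimately show ?case using Suc by linarith
qed

lemma dec_bound2:
  fixes f :: "nat \<Rightarrow> nat"
  assumes d: "\<forall>i j. k \<le> i \<longrightarrow> i < j \<longrightarrow> j \<le> n \<longrightarrow> f j < f i"
  shows "k \<le> x \<Longrightarrow> x \<le> n \<Longrightarrow> f x + (x - k) \<le> f k"
proof (induction "x - k" arbitrary: x)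
  case 0 then show ?case by simp
next
  case (Suc d)
  then have x: "k < x" by simp
  have d: "d = (x - 1) - k" using Suc.hyps(2) by simp
  have "k \<le> x - 1" "x - 1 \<le> n" using x Suc.prems by auto
  then have "f (x - 1) + (x - 1 - k) \<le> f k" using Suc.hyps(1)[OF d] by blast
  moreover have "f x < f (x - 1)"
  proof -
    have "k \<le> x - 1" "x - 1 < x" "x \<le> n" using x Suc.prems by auto
    then show ?thesis using assms by blast
  qed
  ultimately show ?case using Suc x by linarith
qed

lemma decomp:
  assumes p: "p \<in> Sn n" and n: "1 \<le> n" and kdef: "k = p n"
  shows "1 \<le> k" "k \<le> n" "restr k p \<in> Sn (k - 1)" "p = glue k n (restr k p)"
proof -
  have kin: "k \<in> {1..n}" using Sn_in[OF p, of n] n kdef by auto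
  then show k1: "1 \<le> k" and kn: "k \<le> n" by auto
  have invo: "p (p x) = x" for x using p unfolding Sn_def by blast
  have pk: "p k = n" using invo kdef by simp
  have inj: "i = j" if "p i = p j" for i j by (metis invo that)
  have av: "\<not> (1 \<le> i \<and> i < j \<and> j < l \<and> l \<le> n \<and> p l < p i \<and> p i < p j)" for i j l
  proof -
    have "avoids231 n p" using p by (simp add: Sn_def)
    then show ?thesis unfolding avoids231_def by auto
  qed
  have ge: "k \<le> p x" if x: "k \<le> x" "x \<le> n" for x
  proof (cases "x = n \<or> x = k")
    case True then show ?thesis using pk kdef kn by auto
  next
    case False
    show ?thesis
    proof (rule ccontr)
      assume "\<not> k \<le> p x"
      then have y: "p x < k" by simp
      have "p x \<in> {1..n}" using Sn_in[OF p, of x] x k1 by auto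
      then have "1 \<le> p x" by simp
      moreover have "p (p x) = x" by (rule invo)
      ultimately show False using av[of "p x" k n] y False x kn kdef pk by auto
    qed
  qed
  have gt: "k < p x" if x: "k \<le> x" "x \<le> n" "x \<noteq> n" for x
  proof -
    have "p x \<noteq> p n" using inj x(3) by blast
    then show ?thesis using ge[OF x(1,2)] kdef by simp
  qed
  have dec: "\<forall>i j. k \<le> i \<longrightarrow> i < j \<longrightarrow> j \<le> n \<longrightarrow> p j < p i"
  proof (intro allI impI)
    fix i j assume h: "k \<le> i" "i < j" "j \<le> n"
    show "p j < p i"
    proof (cases "j = n")
      case True then show ?thesis using gt[of i] h kdef by simp
    next
      case False
      show ?thesis
      proof (rule ccontr)
        assume "\<not> p j < p i"
        moreover have "p i \<noteq> p j" using inj h by blast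
        ultimately have "p i < p j" by simp
        moreover have "k < p i" using gt[of i] h by simp
        ultimately show False using av[of i j n] h False k1 kdef by auto
      qed
    qed
  qed
  have mid: "p x = k + n - x" if x: "k \<le> x" "x \<le> n" for x
    using dec_bound1[OF dec x] dec_bound2[OF dec x] kdef pk x by linarith
  have lt: "p x < k" if x: "x < k" for x
  proof (cases "x = 0")
    case True then show ?thesis using Sn_out[OF p, of 0] k1 by simp
  next
    case False
    show ?thesis
    proof (rule ccontr)
      assume "\<not> p x < k"
      moreover have "p x \<in> {1..n}" using Sn_in[OF p, of x] x False kn by auto
      ultimately have "p (p x) = k + n - p x" using mid by auto
      moreover have "p x \<le> n" using \<open>p x \<in> {1..n}\<close> by simp
      ultimately show False using invo[of x] x by linarith
    qed
  qed
  let ?r = "restr k p"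
  have rinv: "\<forall>x. ?r (?r x) = x" unfolding restr_def using lt invo by auto
  have rout: "\<forall>x. x \<notin> {1..k-1} \<longrightarrow> ?r x = x"
  proof (intro allI impI)
    fix x assume "x \<notin> {1..k-1}"
    then show "?r x = x" using Sn_out[OF p, of 0] by (cases "x = 0") (auto simp: restr_def)
  qed
  have rav: "avoids231 (k - 1) ?r"
    unfolding avoids231_def
  proof
    assume "\<exists>i j l. 1 \<le> i \<and> i < j \<and> j < l \<and> l \<le> k - 1 \<and> ?r l < ?r i \<and> ?r i < ?r j"
    then obtain i j l where h: "1 \<le> i" "i < j" "j < l" "l \<le> k - 1" "?r l < ?r i" "?r i < ?r j" by blast
    have "l < k" "i < k" "j < k" using h k1 by auto
    then have "p l < p i" "p i < p j" using h unfolding restr_def by auto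
    then show False using av[of i j l] h kn by auto
  qed
  show "?r \<in> Sn (k - 1)" unfolding Sn_def using invol_permutes[OF rinv rout] rinv rav by blast
  show "p = glue k n ?r"
  proof
    fix x show "p x = glue k n ?r x"
      using mid[of x] Sn_out[OF p, of x] unfolding glue_def restr_def by auto
  qed
qed

lemma restr_glue: "r \<in> Sn (k - 1) \<Longrightarrow> 1 \<le> k \<Longrightarrow> restr k (glue k n r) = r"
  unfolding restr_def glue_def using Sn_out[of r "k - 1"] by (auto intro!: ext)


definition fixc :: "nat \<Rightarrow> (nat \<Rightarrow> nat) \<Rightarrow> nat" where
  "fixc n p = card {x \<in> {1..n}. p x = x}"

definition upc :: "nat \<Rightarrow> (nat \<Rightarrow> nat) \<Rightarrow> nat" where
  "upc n p = card {x \<in> {1..n}. x < p x}"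

lemma L1: assumes "(k::nat) \<le> n" shows "(k \<le> x \<and> x \<le> n \<and> k + n - x = x) \<longleftrightarrow> (even (n - k) \<and> x = (k + n) div 2)"
proof -
  obtain q where "n - k = 2 * q \<or> n - k = 2 * q + 1" by (metis oddE evenE)
  then show ?thesis
  proof
    assume h: "n - k = 2 * q"
    then have "n = k + 2 * q" using assms by simp
    moreover have "(k + (k + 2 * q)) div 2 = k + q" by simp
    ultimately show ?thesis using h by auto
  next
    assume h: "n - k = 2 * q + 1"
    then have n: "n = k + 2 * q + 1" using assms by simp
    have "\<not> (k \<le> x \<and> x \<le> n \<and> k + n - x = x)"
    proof
      assume a: "k \<le> x \<and> x \<le> n \<and> k + n - x = x"
      then have e: "k + n - x = x" and le: "x \<le> k + n" by auto
      have "x + x = k + n" using le_add_diff_inverse2[OF le] e by simp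
      then have "2 * x = 2 * (k + q) + 1" using n by simp
      then have "even (2 * (k + q) + 1)" by (metis dvd_triv_left)
      then show False by simp
    qed
    then show ?thesis using h by auto
  qed
qed

lemma L2: assumes "(k::nat) \<le> n" shows "(k \<le> x \<and> x \<le> n \<and> x < k + n - x) \<longleftrightarrow> (k \<le> x \<and> x < k + (n - k + 1) div 2)"
proof -
  obtain q where "n - k = 2 * q \<or> n - k = 2 * q + 1" by (metis oddE evenE)
  then show ?thesis
  proof
    assume h: "n - k = 2 * q"
    then have "n = k + 2 * q" using assms by simp
    moreover have "(2 * q + 1) div 2 = q" by simp
    ultimately show ?thesis using h by auto
  next
    assume h: "n - k = 2 * q + 1"
    then have "n = k + 2 * q + 1" using assms by simp
    moreover have "(2 * q + 1 + 1) div 2 = q + 1" by simp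
    ultimately show ?thesis using h by auto
  qed
qed

lemma glue_fixc:
  assumes k: "1 \<le> k" "k \<le> n" and r: "r \<in> Sn (k - 1)"
  shows "fixc n (glue k n r) = fixc (k - 1) r + (if even (n - k) then 1 else 0)"
proof -
  let ?g = "glue k n r"
  have rlt: "r x < k" if "x < k" for x
  proof -
    have "x \<le> k - 1" using that by simp
    then have "r x \<le> k - 1" using Sn_lt[OF r] by blast
    then show ?thesis using k by simp
  qed
  have eq: "{x \<in> {1..n}. ?g x = x} = {x \<in> {1..k-1}. r x = x} \<union> {x \<in> {k..n}. k + n - x = x}"
    using k unfolding glue_def by auto
  have disj: "{x \<in> {1..k-1}. r x = x} \<inter> {x \<in> {k..n}. k + n - x = x} = {}" using k by auto
  have mid: "{x \<in> {k..n}. k + n - x = x} = (if even (n - k) then {(k + n) div 2} else {})"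
  proof -
    have c: "x \<in> {x \<in> {k..n}. k + n - x = x} \<longleftrightarrow> (even (n - k) \<and> x = (k + n) div 2)" for x
      unfolding mem_Collect_eq atLeastAtMost_iff using L1[OF k(2), of x] by blast
    show ?thesis
    proof (cases "even (n - k)")
      case True
      then have "{x \<in> {k..n}. k + n - x = x} = {(k + n) div 2}" using c by blast
      then show ?thesis using True by simp
    next
      case False
      then have "{x \<in> {k..n}. k + n - x = x} = {}" using c by blast
      then show ?thesis using False by simp
    qed
  qed
  have "fixc n ?g = card {x \<in> {1..k-1}. r x = x} + card {x \<in> {k..n}. k + n - x = x}"
    unfolding fixc_def eq by (rule card_Un_disjoint) (use disj in auto)
  also have "\<dots> = fixc (k - 1) r + (if even (n - k) then 1 else 0)"
    unfolding mid fixc_def by simp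
  finally show ?thesis .
qed

lemma glue_upc:
  assumes k: "1 \<le> k" "k \<le> n" and r: "r \<in> Sn (k - 1)"
  shows "upc n (glue k n r) = upc (k - 1) r + (n - k + 1) div 2"
proof -
  let ?g = "glue k n r"
  have eq: "{x \<in> {1..n}. x < ?g x} = {x \<in> {1..k-1}. x < r x} \<union> {x \<in> {k..n}. x < k + n - x}"
    using k unfolding glue_def by auto
  have disj: "{x \<in> {1..k-1}. x < r x} \<inter> {x \<in> {k..n}. x < k + n - x} = {}" using k by auto
  have mid: "{x \<in> {k..n}. x < k + n - x} = {k..<k + (n - k + 1) div 2}"
  proof -
    have c: "x \<in> {x \<in> {k..n}. x < k + n - x} \<longleftrightarrow> x \<in> {k..<k + (n - k + 1) div 2}" for x
      unfolding mem_Collect_eq atLeastAtMost_iff atLeastLessThan_iff using L2[OF k(2), of x] by blast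
    show ?thesis using c by blast
  qed
  have "upc n ?g = card {x \<in> {1..k-1}. x < r x} + card {x \<in> {k..n}. x < k + n - x}"
    unfolding upc_def eq by (rule card_Un_disjoint) (use disj in auto)
  also have "\<dots> = upc (k - 1) r + (n - k + 1) div 2"
    unfolding mid upc_def by simp
  finally show ?thesis .
qed

lemma finite_Sn: "finite (Sn n)"
proof -
  have "Sn n \<subseteq> {p. p permutes {1..n}}" unfolding Sn_def by auto
  moreover have "finite {p. p permutes {1..n}}" by (rule finite_permutations) simp
  ultimately show ?thesis by (rule finite_subset)
qed

lemma Sn_0: "Sn 0 = {id}"
proof -
  have "p = id" if "p \<in> Sn 0" for p using that unfolding Sn_def by (auto simp: permutes_empty)
  moreover have "id \<in> Sn 0" unfolding Sn_def avoids231_def by (auto simp: permutes_id)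
  ultimately show ?thesis by blast
qed


definition cntP :: "nat \<Rightarrow> (nat \<Rightarrow> nat \<Rightarrow> bool) \<Rightarrow> nat" where
  "cntP n P = card {p \<in> Sn n. P (fixc n p) (upc n p)}"

definition Fk :: "nat \<Rightarrow> (nat \<Rightarrow> nat \<Rightarrow> bool) \<Rightarrow> nat \<Rightarrow> (nat \<Rightarrow> nat) set" where
  "Fk n P k = {r \<in> Sn (k - 1). P (fixc (k - 1) r + (if even (n - k) then 1 else 0)) (upc (k - 1) r + (n - k + 1) div 2)}"

lemma glue_at_n: "k \<le> n \<Longrightarrow> glue k n r n = k"
  unfolding glue_def by simp

lemma cnt_decomp:
  assumes n: "1 \<le> n"
  shows "cntP n P = (\<Sum>k\<in>{1..n}. card (Fk n P k))"
proof -
  have set: "{p \<in> Sn n. P (fixc n p) (upc n p)} = (\<Union>k\<in>{1..n}. glue k n ` Fk n P k)"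
  proof
    show "{p \<in> Sn n. P (fixc n p) (upc n p)} \<subseteq> (\<Union>k\<in>{1..n}. glue k n ` Fk n P k)"
    proof
      fix p assume "p \<in> {p \<in> Sn n. P (fixc n p) (upc n p)}"
      then have p: "p \<in> Sn n" and P: "P (fixc n p) (upc n p)" by auto
      define k where "k = p n"
      note d = decomp[OF p n k_def]
      let ?r = "restr k p"
      have "P (fixc n (glue k n ?r)) (upc n (glue k n ?r))" using P d(4) by simp
      then have "?r \<in> Fk n P k" unfolding Fk_def using glue_fixc[OF d(1,2,3)] glue_upc[OF d(1,2,3)] d(3) by simp
      then have "p \<in> glue k n ` Fk n P k" using d(4) by blast
      then show "p \<in> (\<Union>k\<in>{1..n}. glue k n ` Fk n P k)" using d(1,2) by auto
    qed
  next
    show "(\<Union>k\<in>{1..n}. glue k n ` Fk n P k) \<subseteq> {p \<in> Sn n. P (fixc n p) (upc n p)}"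
    proof
      fix p assume "p \<in> (\<Union>k\<in>{1..n}. glue k n ` Fk n P k)"
      then obtain k r where k: "1 \<le> k" "k \<le> n" and r: "r \<in> Fk n P k" and pdef: "p = glue k n r" by auto
      have rS: "r \<in> Sn (k - 1)" using r unfolding Fk_def by simp
      have "P (fixc n p) (upc n p)" using r unfolding Fk_def pdef glue_fixc[OF k rS] glue_upc[OF k rS] by simp
      then show "p \<in> {p \<in> Sn n. P (fixc n p) (upc n p)}" using glue_in[OF k rS] pdef by simp
    qed
  qed
  have fin: "finite (Fk n P k)" for k unfolding Fk_def using finite_Sn by simp
  have "card (\<Union>k\<in>{1..n}. glue k n ` Fk n P k) = (\<Sum>k\<in>{1..n}. card (glue k n ` Fk n P k))"
  proof (rule card_UN_disjoint)
    show "finite {1..n}" by simp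
    show "\<forall>k\<in>{1..n}. finite (glue k n ` Fk n P k)" using fin by simp
    show "\<forall>k\<in>{1..n}. \<forall>j\<in>{1..n}. k \<noteq> j \<longrightarrow> glue k n ` Fk n P k \<inter> glue j n ` Fk n P j = {}"
    proof (intro ballI impI)
      fix k j assume "k \<in> {1..n}" "j \<in> {1..n}" "k \<noteq> j"
      then show "glue k n ` Fk n P k \<inter> glue j n ` Fk n P j = {}"
        using glue_at_n[of k n] glue_at_n[of j n] by (auto dest: fun_cong[where x = n])
    qed
  qed
  also have "\<dots> = (\<Sum>k\<in>{1..n}. card (Fk n P k))"
  proof (rule sum.cong)
    fix k assume k: "k \<in> {1..n}"
    have "inj_on (glue k n) (Fk n P k)"
    proof (rule inj_on_inverseI)
      fix r assume "r \<in> Fk n P k"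
      then have "r \<in> Sn (k - 1)" unfolding Fk_def by simp
      then show "restr k (glue k n r) = r" using restr_glue k by simp
    qed
    then show "card (glue k n ` Fk n P k) = card (Fk n P k)" by (rule card_image)
  qed simp
  finally show ?thesis unfolding cntP_def set .
qed

lemma cnt_rec:
  "cntP (Suc (Suc m)) P = cntP (Suc m) (\<lambda>a b. P (Suc a) b) + cntP m (\<lambda>a b. P a (Suc b))
     + (if 1 \<le> m then cntP m (\<lambda>a b. P a (Suc b)) else 0)"
proof -
  let ?P1 = "\<lambda>a b. P (Suc a) b" and ?P2 = "\<lambda>a b. P a (Suc b)"
  have "cntP (Suc (Suc m)) P = (\<Sum>k\<in>{1..Suc (Suc m)}. card (Fk (Suc (Suc m)) P k))"
    by (rule cnt_decomp) simp
  also have "\<dots> = (\<Sum>k\<in>{1..m}. card (Fk (Suc (Suc m)) P k)) + card (Fk (Suc (Suc m)) P (Suc m))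
      + card (Fk (Suc (Suc m)) P (Suc (Suc m)))"
    by (simp add: sum.cl_ivl_Suc)
  also have "card (Fk (Suc (Suc m)) P (Suc (Suc m))) = cntP (Suc m) ?P1"
    unfolding Fk_def cntP_def by simp
  also have "card (Fk (Suc (Suc m)) P (Suc m)) = cntP m ?P2"
    unfolding Fk_def cntP_def by simp
  also have "(\<Sum>k\<in>{1..m}. card (Fk (Suc (Suc m)) P k)) = (\<Sum>k\<in>{1..m}. card (Fk m ?P2 k))"
  proof (rule sum.cong)
    fix k assume k: "k \<in> {1..m}"
    have e: "even (Suc (Suc m) - k) = even (m - k)" using k by (simp add: Suc_diff_le)
    have u: "(Suc (Suc m) - k + 1) div 2 = Suc ((m - k + 1) div 2)" using k by (simp add: Suc_diff_le)
    show "card (Fk (Suc (Suc m)) P k) = card (Fk m ?P2 k)"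
      unfolding Fk_def e u by simp
  qed simp
  also have "(\<Sum>k\<in>{1..m}. card (Fk m ?P2 k)) = (if 1 \<le> m then cntP m ?P2 else 0)"
    using cnt_decomp[of m ?P2] by simp
  finally show ?thesis by simp
qed

lemma cnt_1: "cntP (Suc 0) P = cntP 0 (\<lambda>a b. P (Suc a) b)"
proof -
  have "cntP (Suc 0) P = (\<Sum>k\<in>{1..Suc 0}. card (Fk (Suc 0) P k))" by (rule cnt_decomp) simp
  also have "\<dots> = card (Fk (Suc 0) P (Suc 0))" by simp
  also have "\<dots> = cntP 0 (\<lambda>a b. P (Suc a) b)" unfolding Fk_def cntP_def by simp
  finally show ?thesis .
qed

lemma cnt_0: "cntP 0 P = (if P 0 0 then 1 else 0)"
  unfolding cntP_def Sn_0 fixc_def upc_def by simp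


lemma orbit_inv:
  assumes "\<forall>x. p (p x) = x"
  shows "orbit p x = {x, p x}"
proof
  show "orbit p x \<subseteq> {x, p x}"
  proof
    fix y assume "y \<in> orbit p x"
    then show "y \<in> {x, p x}" by induct (use assms in auto)
  qed
next
  have "p x \<in> orbit p x" by (rule orbit.base)
  moreover then have "p (p x) \<in> orbit p x" by (rule orbit.step)
  ultimately show "{x, p x} \<subseteq> orbit p x" using assms by auto
qed

lemma cyc_iff:
  assumes p: "p permutes {1..n}"
  shows "(\<forall>C\<in>cycles_of n p. card C = 1 \<or> card C = 2) \<longleftrightarrow> (\<forall>x. p (p x) = x)"
proof
  assume inv: "\<forall>x. p (p x) = x"
  show "\<forall>C\<in>cycles_of n p. card C = 1 \<or> card C = 2"
  proof
    fix C assume "C \<in> cycles_of n p"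
    then obtain x where C: "C = {x, p x}" unfolding cycles_of_def orbit_inv[OF inv] by blast
    show "card C = 1 \<or> card C = 2"
    proof (cases "p x = x")
      case True then show ?thesis using C by simp
    next
      case False then show ?thesis using C by simp
    qed
  qed
next
  assume h: "\<forall>C\<in>cycles_of n p. card C = 1 \<or> card C = 2"
  show "\<forall>x. p (p x) = x"
  proof
    fix x
    show "p (p x) = x"
    proof (cases "x \<in> {1..n}")
      case False
      then have "p x = x" using p by (simp add: permutes_not_in)
      then show ?thesis by simp
    next
      case True
      then have c: "card (orbit p x) = 1 \<or> card (orbit p x) = 2" using h unfolding cycles_of_def by blast
      have fin: "finite (orbit p x)"
      proof (rule ccontr)
        assume "infinite (orbit p x)"
        then have "card (orbit p x) = 0" by simp
        then show False using c by simp
      qed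
      have perm: "permutation p" using p by (auto simp: permutation_permutes)
      have xo: "x \<in> orbit p x" by (rule permutation_self_in_orbit[OF perm])
      have po: "p x \<in> orbit p x" by (rule orbit.base)
      then have ppo: "p (p x) \<in> orbit p x" by (rule orbit.step)
      have injp: "inj p" using p by (rule permutes_inj)
      show ?thesis
      proof (cases "p x = x")
        case True then show ?thesis by simp
      next
        case False
        have sub: "{x, p x} \<subseteq> orbit p x" using xo po by auto
        have c2: "card {x, p x} = 2" using False by simp
        have "card (orbit p x) \<le> 2" using c by auto
        moreover have "card {x, p x} \<le> card (orbit p x)" by (rule card_mono[OF fin sub])
        ultimately have "card {x, p x} = card (orbit p x)" using c2 by linarith
        then have "{x, p x} = orbit p x" by (rule card_subset_eq[OF fin sub])
        then have "p (p x) = x \<or> p (p x) = p x" using ppo by auto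
        moreover have "p (p x) \<noteq> p x"
        proof
          assume "p (p x) = p x"
          then have "p x = x" using injD[OF injp] by blast
          then show False using False by simp
        qed
        ultimately show ?thesis by blast
      qed
    qed
  qed
qed

lemma ncyc1:
  assumes p: "p \<in> Sn n"
  shows "ncyc 1 p n = fixc n p"
proof -
  have inv: "\<forall>x. p (p x) = x" using p unfolding Sn_def by blast
  have "{C \<in> cycles_of n p. card C = 1} = (\<lambda>x. {x}) ` {x \<in> {1..n}. p x = x}"
  proof
    show "{C \<in> cycles_of n p. card C = 1} \<subseteq> (\<lambda>x. {x}) ` {x \<in> {1..n}. p x = x}"
    proof
      fix C assume "C \<in> {C \<in> cycles_of n p. card C = 1}"
      then obtain x where x: "x \<in> {1..n}" and C: "C = {x, p x}" and c: "card C = 1"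
        unfolding cycles_of_def orbit_inv[OF inv] by auto
      have "p x = x"
      proof (rule ccontr)
        assume "p x \<noteq> x" then have "card C = 2" using C by simp
        then show False using c by simp
      qed
      then show "C \<in> (\<lambda>x. {x}) ` {x \<in> {1..n}. p x = x}" using x C by auto
    qed
  next
    show "(\<lambda>x. {x}) ` {x \<in> {1..n}. p x = x} \<subseteq> {C \<in> cycles_of n p. card C = 1}"
    proof
      fix C assume "C \<in> (\<lambda>x. {x}) ` {x \<in> {1..n}. p x = x}"
      then obtain x where x: "x \<in> {1..n}" "p x = x" and C: "C = {x}" by auto
      have "C = orbit p x" using orbit_inv[OF inv, of x] x C by simp
      then have "C \<in> cycles_of n p" using x unfolding cycles_of_def by blast
      moreover have "card C = 1" using C by simp
      ultimately show "C \<in> {C \<in> cycles_of n p. card C = 1}" by blast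
    qed
  qed
  moreover have "inj_on (\<lambda>x. {x}) {x \<in> {1..n}. p x = x}" by (auto intro: inj_onI)
  ultimately show ?thesis unfolding ncyc_def fixc_def by (simp add: card_image)
qed

lemma ncyc2:
  assumes p: "p \<in> Sn n"
  shows "ncyc 2 p n = upc n p"
proof -
  have inv: "\<forall>x. p (p x) = x" using p unfolding Sn_def by blast
  have pin: "p x \<in> {1..n}" if "x \<in> {1..n}" for x using Sn_in[OF p that] .
  have "{C \<in> cycles_of n p. card C = 2} = (\<lambda>x. {x, p x}) ` {x \<in> {1..n}. x < p x}"
  proof
    show "{C \<in> cycles_of n p. card C = 2} \<subseteq> (\<lambda>x. {x, p x}) ` {x \<in> {1..n}. x < p x}"
    proof
      fix C assume "C \<in> {C \<in> cycles_of n p. card C = 2}"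
      then obtain x where x: "x \<in> {1..n}" and C: "C = {x, p x}" and c: "card C = 2"
        unfolding cycles_of_def orbit_inv[OF inv] by auto
      have ne: "p x \<noteq> x" using c C by auto
      show "C \<in> (\<lambda>x. {x, p x}) ` {x \<in> {1..n}. x < p x}"
      proof (cases "x < p x")
        case True then show ?thesis using x C by auto
      next
        case False
        then have "p x < p (p x)" using ne inv by simp
        moreover have "C = {p x, p (p x)}" using C inv by auto
        ultimately show ?thesis using pin[OF x] by auto
      qed
    qed
  next
    show "(\<lambda>x. {x, p x}) ` {x \<in> {1..n}. x < p x} \<subseteq> {C \<in> cycles_of n p. card C = 2}"
      unfolding cycles_of_def orbit_inv[OF inv] by auto
  qed
  moreover have "inj_on (\<lambda>x. {x, p x}) {x \<in> {1..n}. x < p x}"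
  proof (rule inj_onI)
    fix x y assume x: "x \<in> {x \<in> {1..n}. x < p x}" and y: "y \<in> {x \<in> {1..n}. x < p x}"
      and e: "{x, p x} = {y, p y}"
    show "x = y"
    proof (rule ccontr)
      assume "x \<noteq> y"
      then have "x = p y" "y = p x" using e by (auto simp: doubleton_eq_iff)
      then show False using x y by simp
    qed
  qed
  ultimately show ?thesis unfolding ncyc_def upc_def by (simp add: card_image)
qed

lemma stat_sum:
  assumes p: "p \<in> Sn n"
  shows "fixc n p + 2 * upc n p = n"
proof -
  have inv: "\<forall>x. p (p x) = x" using p unfolding Sn_def by blast
  have pin: "p x \<in> {1..n}" if "x \<in> {1..n}" for x using Sn_in[OF p that] .
  let ?F = "{x \<in> {1..n}. p x = x}" and ?U = "{x \<in> {1..n}. x < p x}" and ?D = "{x \<in> {1..n}. p x < x}"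
  have D: "?D = p ` ?U"
  proof
    show "?D \<subseteq> p ` ?U"
    proof
      fix x assume x: "x \<in> ?D"
      then have x1: "x \<in> {1..n}" and x2: "p x < x" by auto
      have "p x \<in> {1..n}" by (rule pin[OF x1])
      moreover have "p (p x) = x" using inv by blast
      ultimately have "p x \<in> ?U" using x2 by simp
      moreover have "x = p (p x)" using inv by simp
      ultimately show "x \<in> p ` ?U" by blast
    qed
  next
    show "p ` ?U \<subseteq> ?D"
    proof
      fix y assume "y \<in> p ` ?U"
      then obtain x where x1: "x \<in> {1..n}" and x2: "x < p x" and y: "y = p x" by blast
      have "p x \<in> {1..n}" by (rule pin[OF x1])
      moreover have "p (p x) = x" using inv by blast
      ultimately show "y \<in> ?D" using x2 y by simp
    qed
  qed
  have injp: "inj_on p ?U"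
  proof (rule inj_onI)
    fix x y assume "p x = p y"
    then have "p (p x) = p (p y)" by simp
    then show "x = y" using inv by simp
  qed
  have cD: "card ?D = card ?U" unfolding D by (rule card_image[OF injp])
  have un: "{1..n} = ?F \<union> (?U \<union> ?D)" by auto
  have "card (?F \<union> (?U \<union> ?D)) = card ?F + card (?U \<union> ?D)"
    by (rule card_Un_disjoint) auto
  then have "card {1..n} = card ?F + card (?U \<union> ?D)" using arg_cong[OF un, of card] by simp
  also have "card (?U \<union> ?D) = card ?U + card ?D" by (rule card_Un_disjoint) auto
  finally show ?thesis unfolding fixc_def upc_def using cD by simp
qed

lemma Iset_eq:
  "{(n, p) \<in> I_set. ncyc 1 p n = a \<and> ncyc 2 p n = b}
     = (\<lambda>p. (a + 2 * b, p)) ` {p \<in> Sn (a + 2 * b). fixc (a + 2 * b) p = a \<and> upc (a + 2 * b) p = b}"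
proof
  show "{(n, p) \<in> I_set. ncyc 1 p n = a \<and> ncyc 2 p n = b}
     \<subseteq> (\<lambda>p. (a + 2 * b, p)) ` {p \<in> Sn (a + 2 * b). fixc (a + 2 * b) p = a \<and> upc (a + 2 * b) p = b}"
  proof
    fix z assume z: "z \<in> {(n, p) \<in> I_set. ncyc 1 p n = a \<and> ncyc 2 p n = b}"
    obtain n p where zd: "z = (n, p)" by fastforce
    have h: "p permutes {1..n}" "avoids231 n p" "\<forall>C\<in>cycles_of n p. card C = 1 \<or> card C = 2"
      "ncyc 1 p n = a" "ncyc 2 p n = b"
      using z unfolding zd I_set_def by auto
    have pS: "p \<in> Sn n" unfolding Sn_def using h cyc_iff[OF h(1)] by blast
    have fa: "fixc n p = a" and ub: "upc n p = b" using h ncyc1[OF pS] ncyc2[OF pS] by auto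
    have "n = a + 2 * b" using stat_sum[OF pS] fa ub by simp
    then show "z \<in> (\<lambda>p. (a + 2 * b, p)) ` {p \<in> Sn (a + 2 * b). fixc (a + 2 * b) p = a \<and> upc (a + 2 * b) p = b}"
      using zd pS fa ub by auto
  qed
next
  show "(\<lambda>p. (a + 2 * b, p)) ` {p \<in> Sn (a + 2 * b). fixc (a + 2 * b) p = a \<and> upc (a + 2 * b) p = b}
    \<subseteq> {(n, p) \<in> I_set. ncyc 1 p n = a \<and> ncyc 2 p n = b}"
  proof
    fix z assume "z \<in> (\<lambda>p. (a + 2 * b, p)) ` {p \<in> Sn (a + 2 * b). fixc (a + 2 * b) p = a \<and> upc (a + 2 * b) p = b}"
    then obtain p where zd: "z = (a + 2 * b, p)" and pS: "p \<in> Sn (a + 2 * b)"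
      and fa: "fixc (a + 2 * b) p = a" and ub: "upc (a + 2 * b) p = b" by auto
    have h: "p permutes {1..a + 2 * b}" "avoids231 (a + 2 * b) p" "\<forall>x. p (p x) = x"
      using pS unfolding Sn_def by auto
    show "z \<in> {(n, p) \<in> I_set. ncyc 1 p n = a \<and> ncyc 2 p n = b}"
      unfolding zd I_set_def using h cyc_iff[OF h(1)] ncyc1[OF pS] ncyc2[OF pS] fa ub by auto
  qed
qed

lemma card_Iset:
  "card {(n, p) \<in> I_set. ncyc 1 p n = a \<and> ncyc 2 p n = b} = cntP (a + 2 * b) (\<lambda>x y. x = a \<and> y = b)"
  unfolding Iset_eq cntP_def by (rule card_image) (auto intro: inj_onI)


abbreviation CC :: "nat \<Rightarrow> nat \<Rightarrow> nat \<Rightarrow> nat" where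
  "CC n a b \<equiv> cntP n (\<lambda>x y. x = a \<and> y = b)"

lemma shiftA: "cntP n (\<lambda>x y. Suc x = a \<and> y = b) = (if a = 0 then 0 else CC n (a - 1) b)"
  by (cases a) (simp_all add: cntP_def)

lemma shiftB: "cntP n (\<lambda>x y. x = a \<and> Suc y = b) = (if b = 0 then 0 else CC n a (b - 1))"
  by (cases b) (simp_all add: cntP_def)

definition ff :: "nat \<Rightarrow> nat \<Rightarrow> real" where
  "ff a b = real (CC (a + 2 * b) a b)"

lemma ff_rec:
  "ff a b - (if a = 0 then 0 else ff (a - 1) b) - 2 * (if b = 0 then 0 else ff a (b - 1))
     = (if a = 0 \<and> b = 0 then 1 else if a = 0 \<and> b = 1 then -1 else 0)"
proof (cases "a + 2 * b")
  case 0
  then have "a = 0" "b = 0" by auto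
  then show ?thesis by (simp add: ff_def cnt_0)
next
  case (Suc n)
  show ?thesis
  proof (cases n)
    case 0
    have b0: "b = 0"
    proof (rule ccontr)
      assume "b \<noteq> 0" then have "a + 2 * b \<ge> 2" by simp
      then show False using Suc 0 by simp
    qed
    have ab: "a = 1" "b = 0" using Suc 0 b0 by simp_all
    have "CC (Suc 0) 1 0 = CC 0 0 0" using cnt_1[of "\<lambda>x y. x = 1 \<and> y = 0"] shiftA[of 0 1 0] by simp
    then show ?thesis using ab by (simp add: ff_def cnt_0)
  next
    case (Suc m)
    note nm = \<open>a + 2 * b = Suc n\<close>[unfolded Suc]
    have r: "CC (a + 2 * b) a b = (if a = 0 then 0 else CC (Suc m) (a - 1) b) + (if b = 0 then 0 else CC m a (b - 1))
       + (if 1 \<le> m then (if b = 0 then 0 else CC m a (b - 1)) else 0)"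
      unfolding nm cnt_rec shiftA shiftB by simp
    have A: "(if a = 0 then 0 else ff (a - 1) b) = real (if a = 0 then 0 else CC (Suc m) (a - 1) b)"
    proof (cases "a = 0")
      case False
      then have "a - 1 + 2 * b = Suc m" using nm by simp
      then show ?thesis using False by (simp add: ff_def)
    qed simp
    have B: "(if b = 0 then 0 else ff a (b - 1)) = real (if b = 0 then 0 else CC m a (b - 1))"
    proof (cases "b = 0")
      case False
      then have "a + 2 * (b - 1) = m" using nm by simp
      then show ?thesis using False by (simp add: ff_def)
    qed simp
    have ffab: "ff a b = real (if a = 0 then 0 else CC (Suc m) (a - 1) b) + real (if b = 0 then 0 else CC m a (b - 1))
       + (if 1 \<le> m then real (if b = 0 then 0 else CC m a (b - 1)) else 0)"
      unfolding ff_def r by simp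
    show ?thesis
    proof (cases "1 \<le> m")
      case True
      then have "\<not> (a = 0 \<and> b = 0) \<and> \<not> (a = 0 \<and> b = 1)" using nm by auto
      then show ?thesis unfolding ffab A B using True by simp
    next
      case False
      then have m0: "m = 0" by simp
      have "(a = 2 \<and> b = 0) \<or> (a = 0 \<and> b = 1)"
      proof (cases "b = 0")
        case True then show ?thesis using nm m0 by simp
      next
        case False
        then have "b \<ge> 1" by simp
        then have "b = 1" using nm m0 by linarith
        then show ?thesis using nm m0 by simp
      qed
      then show ?thesis
      proof
        assume "a = 2 \<and> b = 0"
        then show ?thesis unfolding ffab A B using m0 by simp
      next
        assume ab: "a = 0 \<and> b = 1"
        have "CC 0 0 0 = 1" by (simp add: cnt_0)
        then show ?thesis unfolding ffab A B using m0 ab by simp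
      qed
    qed
  qed
qed

lemma i_gf_nth: "i_gf $ b $ a = ff a b"
  unfolding i_gf_def ff_def fps_nth_Abs_fps card_Iset ..

lemma two_nth: "(2 * (f :: 'a::comm_ring_1 fps)) $ n = 2 * f $ n"
proof -
  have "(2 * f) $ n = (f + f) $ n" by (simp only: mult_2)
  also have "\<dots> = f $ n + f $ n" by (rule fps_add_nth)
  also have "\<dots> = 2 * f $ n" by (simp only: mult_2)
  finally show ?thesis .
qed

lemma key: "i_gf * (1 - t_var - 2 * fps_X) = 1 - fps_X"
proof -
  have eq: "i_gf * (1 - t_var - 2 * fps_X) = i_gf - fps_const fps_X * i_gf - 2 * (fps_X * i_gf)"
    by (simp add: t_var_def algebra_simps)
  show ?thesis
  proof (rule fps_ext)
    fix b
    show "(i_gf * (1 - t_var - 2 * fps_X)) $ b = (1 - fps_X) $ b"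
    proof (rule fps_ext)
      fix a
      have "(i_gf * (1 - t_var - 2 * fps_X)) $ b $ a
          = ff a b - (if a = 0 then 0 else ff (a - 1) b) - 2 * (if b = 0 then 0 else ff a (b - 1))"
      proof -
        have "(i_gf * (1 - t_var - 2 * fps_X)) $ b = i_gf $ b - fps_X * i_gf $ b - 2 * (if b = 0 then 0 else i_gf $ (b - 1))"
          unfolding eq fps_sub_nth fps_mult_left_const_nth two_nth fps_X_mult_nth by simp
        then have "(i_gf * (1 - t_var - 2 * fps_X)) $ b $ a = i_gf $ b $ a - (fps_X * i_gf $ b) $ a - (2 * (if b = 0 then 0 else i_gf $ (b - 1))) $ a"
          by simp
        also have "\<dots> = i_gf $ b $ a - (if a = 0 then 0 else i_gf $ b $ (a - 1)) - 2 * (if b = 0 then 0 else i_gf $ (b - 1) $ a)"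
          unfolding fps_X_mult_nth two_nth by simp
        finally show ?thesis unfolding i_gf_nth .
      qed
      also have "\<dots> = (if a = 0 \<and> b = 0 then 1 else if a = 0 \<and> b = 1 then -1 else 0)" by (rule ff_rec)
      also have "\<dots> = (1 - fps_X) $ b $ a" by simp
      finally show "(i_gf * (1 - t_var - 2 * fps_X)) $ b $ a = (1 - fps_X) $ b $ a" .
    qed
  qed
qed

theorem lemma3p8:
  shows "i_gf = (1 - fps_X) * inverse (1 - t_var - 2 * fps_X)"
proof -
  let ?D = "1 - t_var - 2 * fps_X :: real fps fps"
  have y: "?D $ 0 * inverse (?D $ 0) = 1"
    by (rule inverse_mult_eq_1') (simp add: t_var_def)
  have "inverse ?D = fps_right_inverse ?D (inverse (?D $ 0))" by (rule fps_inverse_def)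
  then have inv: "?D * inverse ?D = 1" using fps_right_inverse[OF y] by simp
  have "i_gf = i_gf * (?D * inverse ?D)" using inv by simp
  also have "\<dots> = (i_gf * ?D) * inverse ?D" by (simp add: mult.assoc)
  also have "\<dots> = (1 - fps_X) * inverse ?D" using key by simp
  finally show ?thesis .
qed

end
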